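(* Let $G$ be a finite group with $G/Z(G)\cong D_{2m}$, $m\ge3$. Then $\Gamma_G$ is Q-integral iff $m$ is odd.
   Context: $D_{2m}=\langle x,y\mid x^m=y^2=1,\ yxy^{-1}=x^{-1}\rangle$. The NCCC-graph $\Gamma_G$ of a finite non-abelian group $G$ with center $Z(G)$ has vertex set $\{x^G: x\in G\setminus Z(G)\}$ ($x^G$ the conjugacy class of $x$), distinct vertices $x^G,y^G$ adjacent iff $x'y'\neq y'x'$ for all $x'\in x^G,y'\in y^G$. A graph is Q-integral if all eigenvalues of its signless Laplacian $Q=D+A$ ($A$ adjacency, $D$ degree matrix) are integers. *)

theory Defs
  imports Complex_Main "HOL-Algebra.Algebra"
begin

definition grp_center :: "('a, 'b) monoid_scheme \<Rightarrow> 'a set" where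
  "grp_center G = {z \<in> carrier G. \<forall>g \<in> carrier G. z \<otimes>\<^bsub>G\<^esub> g = g \<otimes>\<^bsub>G\<^esub> z}"

definition conj_class :: "('a, 'b) monoid_scheme \<Rightarrow> 'a \<Rightarrow> 'a set" where
  "conj_class G x = {g \<otimes>\<^bsub>G\<^esub> x \<otimes>\<^bsub>G\<^esub> inv\<^bsub>G\<^esub> g | g. g \<in> carrier G}"

text \<open>Dihedral group D_{2m} of order 2m, concretely: the pair (i, e) stands for x^i y^e,
  with 0 \<le> i < m and e \<in> {0,1}; the relations x^m = y^2 = 1, y x y^{-1} = x^{-1}
  give (i,e)(j,f) = (i + (-1)^e j mod m, e + f mod 2).\<close>

definition dihedral :: "nat \<Rightarrow> (int \<times> int) monoid" where
  "dihedral m = \<lparr> carrier = {0..<int m} \<times> {0, 1},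
     monoid.mult = (\<lambda>(i, e) (j, f). ((i + (-1) ^ nat e * j) mod int m, (e + f) mod 2)),
     monoid.one = (0, 0) \<rparr>"

definition NCCC_vertices :: "('a, 'b) monoid_scheme \<Rightarrow> 'a set set" where
  "NCCC_vertices G = conj_class G ` (carrier G - grp_center G)"

definition NCCC_adj :: "('a, 'b) monoid_scheme \<Rightarrow> 'a set \<Rightarrow> 'a set \<Rightarrow> bool" where
  "NCCC_adj G C D \<longleftrightarrow> C \<noteq> D \<and>
     (\<forall>x' \<in> C. \<forall>y' \<in> D. x' \<otimes>\<^bsub>G\<^esub> y' \<noteq> y' \<otimes>\<^bsub>G\<^esub> x')"

definition graph_degree :: "'v set \<Rightarrow> ('v \<Rightarrow> 'v \<Rightarrow> bool) \<Rightarrow> 'v \<Rightarrow> nat" where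
  "graph_degree V adj u = card {w \<in> V. adj u w}"

definition signless_laplacian :: "'v set \<Rightarrow> ('v \<Rightarrow> 'v \<Rightarrow> bool) \<Rightarrow> 'v \<Rightarrow> 'v \<Rightarrow> complex" where
  "signless_laplacian V adj u w =
     (if u = w then of_nat (graph_degree V adj u) else 0) + (if adj u w then 1 else 0)"

definition is_eigenvalue_on :: "'v set \<Rightarrow> ('v \<Rightarrow> 'v \<Rightarrow> complex) \<Rightarrow> complex \<Rightarrow> bool" where
  "is_eigenvalue_on V M c \<longleftrightarrow>
     (\<exists>v :: 'v \<Rightarrow> complex. (\<exists>u \<in> V. v u \<noteq> 0) \<and>
        (\<forall>u \<in> V. (\<Sum>w \<in> V. M u w * v w) = c * v u))"

definition Q_integral :: "'v set \<Rightarrow> ('v \<Rightarrow> 'v \<Rightarrow> bool) \<Rightarrow> bool" where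
  "Q_integral V adj \<longleftrightarrow>
     (\<forall>c. is_eigenvalue_on V (signless_laplacian V adj) c \<longrightarrow> c \<in> \<int>)"

end

theory Submission
  imports Defs
begin

lemma Q_sum:
  assumes "finite V" "u \<in> V"
  shows "(\<Sum>w\<in>V. signless_laplacian V adj u w * v w) =
     of_nat (graph_degree V adj u) * v u + (\<Sum>w\<in>{w\<in>V. adj u w}. v w)"
proof -
  have "(\<Sum>w\<in>V. signless_laplacian V adj u w * v w) =
    (\<Sum>w\<in>V. (if u = w then of_nat (graph_degree V adj u) * v w else 0)) + (\<Sum>w\<in>V. (if adj u w then v w else 0))"
    unfolding signless_laplacian_def sum.distrib[symmetric] by (rule sum.cong) (auto simp: algebra_simps)
  also have "(\<Sum>w\<in>V. (if u = w then of_nat (graph_degree V adj u) * v w else 0)) = of_nat (graph_degree V adj u) * v u"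
    using assms by (simp add: sum.delta)
  also have "(\<Sum>w\<in>V. (if adj u w then v w else 0)) = (\<Sum>w\<in>{w\<in>V. adj u w}. v w)"
    using assms by (simp add: sum.inter_filter)
  finally show ?thesis .
qed

lemma bipartite_Q_integral:
  assumes fin: "finite V" and VPS: "V = P \<union> S" and disj: "P \<inter> S = {}"
    and adj: "\<And>u w. u \<in> V \<Longrightarrow> w \<in> V \<Longrightarrow> adj u w \<longleftrightarrow> (u \<in> P \<and> w \<in> S) \<or> (u \<in> S \<and> w \<in> P)"
  shows "Q_integral V adj"
  unfolding Q_integral_def
proof (intro allI impI)
  fix c assume "is_eigenvalue_on V (signless_laplacian V adj) c"
  then obtain v where nz: "\<exists>u\<in>V. v u \<noteq> 0" and ev: "\<And>u. u \<in> V \<Longrightarrow> (\<Sum>w\<in>V. signless_laplacian V adj u w * v w) = c * v u"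
    unfolding is_eigenvalue_on_def by blast
  have finP: "finite P" and finS: "finite S" using fin VPS by auto
  define r where "r = card P"
  define s where "s = card S"
  define \<alpha> where "\<alpha> = (\<Sum>w\<in>P. v w)"
  define \<beta> where "\<beta> = (\<Sum>w\<in>S. v w)"
  have nP: "{w\<in>V. adj u w} = S" if "u \<in> P" for u using that adj VPS disj by auto
  have nS: "{w\<in>V. adj u w} = P" if "u \<in> S" for u using that adj VPS disj by auto
  have eP: "of_nat s * v u + \<beta> = c * v u" if "u \<in> P" for u
    using ev[of u] Q_sum[OF fin, of u adj v] that nP[OF that] VPS
    unfolding graph_degree_def s_def \<beta>_def by auto
  have eS: "of_nat r * v u + \<alpha> = c * v u" if "u \<in> S" for u
    using ev[of u] Q_sum[OF fin, of u adj v] that nS[OF that] VPS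
    unfolding graph_degree_def r_def \<alpha>_def by auto
  show "c \<in> \<int>"
  proof (cases "c = of_nat s \<or> c = of_nat r")
    case True then show ?thesis by (metis Ints_of_nat)
  next
    case False
    then have cs: "c - of_nat s \<noteq> 0" and cr: "c - of_nat r \<noteq> 0" by auto
    have vP: "v u = \<beta> / (c - of_nat s)" if "u \<in> P" for u
      using eP[OF that] cs by (simp add: field_simps)
    have vS: "v u = \<alpha> / (c - of_nat r)" if "u \<in> S" for u
      using eS[OF that] cr by (simp add: field_simps)
    have a: "\<alpha> = of_nat r * (\<beta> / (c - of_nat s))"
      unfolding \<alpha>_def r_def using vP by simp
    have b: "\<beta> = of_nat s * (\<alpha> / (c - of_nat r))"
      unfolding \<beta>_def s_def using vS by simp
    have "\<beta> \<noteq> 0"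
    proof
      assume "\<beta> = 0"
      then have "\<alpha> = 0" using a by simp
      then have "v u = 0" if "u \<in> V" for u using that VPS vP vS \<open>\<beta> = 0\<close> by auto
      then show False using nz by auto
    qed
    have e1: "\<alpha> * (c - of_nat s) = of_nat r * \<beta>" using a cs by (simp add: field_simps)
    have e2: "\<beta> * (c - of_nat r) = of_nat s * \<alpha>" using b cr by (simp add: field_simps)
    have "\<beta> * ((c - of_nat s) * (c - of_nat r)) = (\<beta> * (c - of_nat r)) * (c - of_nat s)" by (simp add: ac_simps)
    also have "\<dots> = of_nat s * (\<alpha> * (c - of_nat s))" by (simp add: e2)
    also have "\<dots> = \<beta> * (of_nat s * of_nat r)" by (simp add: e1)
    finally have "(c - of_nat s) * (c - of_nat r) = of_nat s * of_nat r"
      using \<open>\<beta> \<noteq> 0\<close> by simp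
    then have "c * (c - (of_nat r + of_nat s)) = 0" by (simp add: algebra_simps)
    then have "c = 0 \<or> c = of_nat (r + s)" by auto
    then show ?thesis by (metis Ints_0 Ints_of_nat)
  qed
qed

lemma tripartite_eigen:
  assumes fin: "finite V" and VPS: "V = I \<union> A \<union> B" and disj: "I \<inter> A = {}" "I \<inter> B = {}" "A \<inter> B = {}"
    and adj: "\<And>u w. u \<in> V \<Longrightarrow> w \<in> V \<Longrightarrow> adj u w \<longleftrightarrow>
       (u \<in> I \<and> w \<notin> I) \<or> (u \<in> A \<and> w \<notin> A) \<or> (u \<in> B \<and> w \<notin> B)"
    and cA: "card A = p" and cB: "card B = p" and cI: "card I = n" and p: "p \<ge> 1" and In: "I \<noteq> {}"
    and lam: "lm^2 - of_nat (n + 4*p) * lm + of_nat (4*p^2) = 0"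
  shows "is_eigenvalue_on V (signless_laplacian V adj) lm"
proof -
  define v where "v w = (if w \<in> I then of_nat (2*p) else lm - of_nat (2*p))" for w :: 'a
  have finI: "finite I" and finA: "finite A" and finB: "finite B" using fin VPS by auto
  have nI: "{w\<in>V. adj u w} = A \<union> B" if "u \<in> I" for u using that adj VPS disj by auto
  have nA: "{w\<in>V. adj u w} = I \<union> B" if "u \<in> A" for u using that adj VPS disj by auto
  have nB: "{w\<in>V. adj u w} = I \<union> A" if "u \<in> B" for u using that adj VPS disj by auto
  have sA: "(\<Sum>w\<in>A. v w) = of_nat p * (lm - of_nat (2*p))"
  proof -
    have "(\<Sum>w\<in>A. v w) = (\<Sum>w\<in>A. lm - of_nat (2*p))" using disj by (intro sum.cong) (auto simp: v_def)
    then show ?thesis using cA by simp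
  qed
  have sB: "(\<Sum>w\<in>B. v w) = of_nat p * (lm - of_nat (2*p))"
  proof -
    have "(\<Sum>w\<in>B. v w) = (\<Sum>w\<in>B. lm - of_nat (2*p))" using disj by (intro sum.cong) (auto simp: v_def)
    then show ?thesis using cB by simp
  qed
  have sI: "(\<Sum>w\<in>I. v w) = of_nat n * of_nat (2*p)"
  proof -
    have "(\<Sum>w\<in>I. v w) = (\<Sum>w\<in>I. of_nat (2*p))" by (intro sum.cong) (auto simp: v_def)
    then show ?thesis using cI by simp
  qed
  have "(\<Sum>w\<in>V. signless_laplacian V adj u w * v w) = lm * v u" if u: "u \<in> V" for u
  proof -
    have Q: "(\<Sum>w\<in>V. signless_laplacian V adj u w * v w) = of_nat (graph_degree V adj u) * v u + (\<Sum>w\<in>{w\<in>V. adj u w}. v w)"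
      by (rule Q_sum[OF fin u])
    consider "u \<in> I" | "u \<in> A" | "u \<in> B" using u VPS by auto
    then show ?thesis
    proof cases
      case 1
      have d: "graph_degree V adj u = 2*p" unfolding graph_degree_def nI[OF 1]
        using card_Un_disjoint[OF finA finB] disj cA cB by simp
      have "(\<Sum>w\<in>{w\<in>V. adj u w}. v w) = 2 * of_nat p * (lm - of_nat (2*p))"
        unfolding nI[OF 1] using sum.union_disjoint[OF finA finB disj(3), of v] sA sB by (simp add: algebra_simps)
      then show ?thesis using Q d 1 unfolding v_def by (simp add: algebra_simps)
    next
      case 2
      have d: "graph_degree V adj u = n + p" unfolding graph_degree_def nA[OF 2]
        using card_Un_disjoint[OF finI finB] disj cI cB by simp
      have "(\<Sum>w\<in>{w\<in>V. adj u w}. v w) = of_nat n * of_nat (2*p) + of_nat p * (lm - of_nat (2*p))"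
        unfolding nA[OF 2] using sum.union_disjoint[OF finI finB disj(2), of v] sI sB by simp
      moreover have "v u = lm - of_nat (2*p)" using 2 disj unfolding v_def by auto
      ultimately have "(\<Sum>w\<in>V. signless_laplacian V adj u w * v w) =
         of_nat (n+p) * (lm - of_nat (2*p)) + (of_nat n * of_nat (2*p) + of_nat p * (lm - of_nat (2*p)))"
        using Q d by simp
      moreover have eqd: "of_nat (n+p) * (lm - of_nat (2*p)) + (of_nat n * of_nat (2*p) + of_nat p * (lm - of_nat (2*p)))
         - lm * (lm - of_nat (2*p)) = - (lm^2 - of_nat (n + 4*p) * lm + of_nat (4*p^2))"
        by (simp add: algebra_simps power2_eq_square)
      have "of_nat (n+p) * (lm - of_nat (2*p)) + (of_nat n * of_nat (2*p) + of_nat p * (lm - of_nat (2*p)))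
         - lm * (lm - of_nat (2*p)) = 0" using eqd by (simp only: lam minus_zero)
      ultimately show ?thesis using \<open>v u = lm - of_nat (2*p)\<close> by (simp only: right_minus_eq)
    next
      case 3
      have d: "graph_degree V adj u = n + p" unfolding graph_degree_def nB[OF 3]
        using card_Un_disjoint[OF finI finA] disj cI cA by simp
      have "(\<Sum>w\<in>{w\<in>V. adj u w}. v w) = of_nat n * of_nat (2*p) + of_nat p * (lm - of_nat (2*p))"
        unfolding nB[OF 3] using sum.union_disjoint[OF finI finA disj(1), of v] sI sA by simp
      moreover have "v u = lm - of_nat (2*p)" using 3 disj unfolding v_def by auto
      ultimately have "(\<Sum>w\<in>V. signless_laplacian V adj u w * v w) =
         of_nat (n+p) * (lm - of_nat (2*p)) + (of_nat n * of_nat (2*p) + of_nat p * (lm - of_nat (2*p)))"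
        using Q d by simp
      moreover have eqd: "of_nat (n+p) * (lm - of_nat (2*p)) + (of_nat n * of_nat (2*p) + of_nat p * (lm - of_nat (2*p)))
         - lm * (lm - of_nat (2*p)) = - (lm^2 - of_nat (n + 4*p) * lm + of_nat (4*p^2))"
        by (simp add: algebra_simps power2_eq_square)
      have "of_nat (n+p) * (lm - of_nat (2*p)) + (of_nat n * of_nat (2*p) + of_nat p * (lm - of_nat (2*p)))
         - lm * (lm - of_nat (2*p)) = 0" using eqd by (simp only: lam minus_zero)
      ultimately show ?thesis using \<open>v u = lm - of_nat (2*p)\<close> by (simp only: right_minus_eq)
    qed
  qed
  moreover obtain u where "u \<in> I" using In by auto
  then have "u \<in> V" "v u \<noteq> 0" using VPS p unfolding v_def by auto
  ultimately show ?thesis unfolding is_eigenvalue_on_def by blast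
qed



lemma no_int_root:
  fixes k :: int and m p :: nat
  assumes "even m" "m \<ge> 3" "p \<ge> 1"
    and eq: "k^2 - (int ((m-1)*p) + 4 * int p) * k + 4 * (int p)^2 = 0"
  shows False
proof -
  define M where "M = int m"
  define P where "P = int p"
  have M3: "M \<ge> 3" and P1: "P \<ge> 1" using assms unfolding M_def P_def by auto
  have nn: "int ((m-1)*p) = (M - 1) * P" unfolding M_def P_def using assms by (simp add: of_nat_diff)
  define J where "J = 2*k - ((M-1)*P + 4*P)"
  have eq': "k^2 - ((M-1)*P + 4*P)*k + 4*P^2 = 0" using eq unfolding nn P_def by simp
  have "J^2 = 4*(k^2 - ((M-1)*P + 4*P)*k + 4*P^2) + P^2 * ((M+3)^2 - 16)"
    unfolding J_def by (simp add: algebra_simps power2_eq_square)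
  then have JJ: "J^2 = P^2 * ((M+3)^2 - 16)" using eq' by simp
  then have "P^2 dvd J^2" by simp
  then have "P dvd J" by simp
  then obtain j where j: "J = P * j" by blast
  have "P^2 * j^2 = P^2 * ((M+3)^2 - 16)" using JJ j by (simp add: power_mult_distrib)
  then have jj: "j^2 = (M+3)^2 - 16" using P1 by simp
  define a where "a = M + 3 - \<bar>j\<bar>"
  define b where "b = M + 3 + \<bar>j\<bar>"
  have ab: "a * b = 16" unfolding a_def b_def using jj by (simp add: algebra_simps power2_eq_square)
  have "\<bar>j\<bar> < M + 3"
  proof (rule ccontr)
    assume "\<not> \<bar>j\<bar> < M + 3"
    then have "(M+3)^2 \<le> \<bar>j\<bar>^2" using M3 by (intro power_mono) auto
    then show False using jj by simp
  qed
  then have a1: "a \<ge> 1" unfolding a_def by simp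
  have ableb: "a \<le> b" unfolding a_def b_def by simp
  have "a * a \<le> a * b" using ableb a1 by (simp add: mult_left_mono)
  then have aa: "a * a \<le> 16" using ab by simp
  have "a \<le> 4"
  proof (rule ccontr)
    assume "\<not> a \<le> 4"
    then have "5 * 5 \<le> a * a" by (intro mult_mono) auto
    then show False using aa by simp
  qed
  have ev: "even M" using assms unfolding M_def by simp
  have sum: "a + b = 2*M + 6" unfolding a_def b_def by simp
  consider "a = 1" | "a = 2" | "a = 3" | "a = 4" using a1 \<open>a \<le> 4\<close> by linarith
  then show False
  proof cases
    case 1 then have "b = 16" using ab by simp
    then show False using sum 1 by presburger
  next
    case 2 then have "b = 8" using ab by simp
    then show False using sum 2 M3 by simp
  next
    case 3 then show False using ab by presburger
  next
    case 4 then have "b = 4" using ab by simp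
    then show False using sum 4 M3 by simp
  qed
qed



definition dmul :: "nat \<Rightarrow> int \<times> int \<Rightarrow> int \<times> int \<Rightarrow> int \<times> int" where
  "dmul m = (\<lambda>(i, e) (j, f). ((i + (-1) ^ nat e * j) mod int m, (e + f) mod 2))"

lemma dihedral_mult: "monoid.mult (dihedral m) = dmul m"
  unfolding dihedral_def dmul_def by simp

lemma dcar: "(i, e) \<in> carrier (dihedral m) \<longleftrightarrow> 0 \<le> i \<and> i < int m \<and> (e = 0 \<or> e = 1)"
  unfolding dihedral_def by auto

lemma dmul0: "dmul m (i, 0) (j, f) = ((i + j) mod int m, f mod 2)"
  by (simp add: dmul_def)
lemma dmul1: "dmul m (i, 1) (j, f) = ((i - j) mod int m, (1 + f) mod 2)"
  by (simp add: dmul_def)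

lemma dmul_unit: "u \<in> carrier (dihedral m) \<Longrightarrow> dmul m u (0, 0) = u"
  by (cases u) (auto simp: dcar dmul_def)

lemma mod_cancel_aux:
  fixes j j' :: int
  assumes "0 \<le> j" "j < int m" "0 \<le> j'" "j' < int m" "(a + j) mod int m = (a + j') mod int m"
  shows "j = j'"
proof -
  have "int m dvd (a + j) - (a + j')" using assms(5) by (simp add: mod_eq_dvd_iff)
  then have d: "int m dvd j - j'" by simp
  show ?thesis
  proof (rule ccontr)
    assume "j \<noteq> j'"
    then have "\<bar>int m\<bar> \<le> \<bar>j - j'\<bar>" using d by (intro dvd_imp_le_int) auto
    then show False using assms by linarith
  qed
qed

lemma dmul_cancel:
  assumes "u \<in> carrier (dihedral m)" "v \<in> carrier (dihedral m)" "w \<in> carrier (dihedral m)"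
    and "dmul m u v = dmul m u w"
  shows "v = w"
proof -
  obtain i e where u: "u = (i, e)" by (cases u)
  obtain j f where v: "v = (j, f)" by (cases v)
  obtain j' f' where w: "w = (j', f')" by (cases w)
  have c: "0 \<le> j" "j < int m" "0 \<le> j'" "j' < int m" "f = 0 \<or> f = 1" "f' = 0 \<or> f' = 1" "e = 0 \<or> e = 1"
    using assms(1-3) u v w by (auto simp: dcar)
  show ?thesis
  proof (cases "e = 0")
    case True
    then have "(i + j) mod int m = (i + j') mod int m" "f mod 2 = f' mod 2"
      using assms(4) u v w by (auto simp: dmul0)
    then show ?thesis using c v w mod_cancel_aux[of j m j' i] by auto
  next
    case False
    then have e1: "e = 1" using c by auto
    then have h: "(i - j) mod int m = (i - j') mod int m" "(1 + f) mod 2 = (1 + f') mod 2"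
      using assms(4) u v w by (auto simp: dmul1)
    have "int m dvd (i - j) - (i - j')" using h(1) by (simp add: mod_eq_dvd_iff)
    then have d: "int m dvd j' - j" by simp
    have "j' = j"
    proof (rule ccontr)
      assume "j' \<noteq> j"
      then have "\<bar>int m\<bar> \<le> \<bar>j' - j\<bar>" using d by (intro dvd_imp_le_int) auto
      then show False using c by linarith
    qed
    then show ?thesis using c h(2) v w by auto
  qed
qed



lemma card_fibers:
  assumes "finite A" "finite B" "f ` A \<subseteq> B" "\<And>b. b \<in> B \<Longrightarrow> card {a\<in>A. f a = b} = k"
  shows "card A = k * card B"
proof -
  have "A = (\<Union>b\<in>B. {a\<in>A. f a = b})" using assms(3) by auto
  then have "card A = card (\<Union>b\<in>B. {a\<in>A. f a = b})" by simp
  also have "\<dots> = (\<Sum>b\<in>B. card {a\<in>A. f a = b})"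
    using assms(1,2) by (intro card_UN_disjoint) auto
  also have "\<dots> = k * card B" using assms(4) by simp
  finally show ?thesis .
qed

locale dz = group G for G (structure) +
  fixes m :: nat and \<pi> :: "'a \<Rightarrow> int \<times> int"
  assumes finG: "finite (carrier G)" and m3: "m \<ge> 3"
    and \<pi>_car: "g \<in> carrier G \<Longrightarrow> \<pi> g \<in> carrier (dihedral m)"
    and \<pi>_mult: "g \<in> carrier G \<Longrightarrow> h \<in> carrier G \<Longrightarrow> \<pi> (g \<otimes> h) = dmul m (\<pi> g) (\<pi> h)"
    and \<pi>_surj: "d \<in> carrier (dihedral m) \<Longrightarrow> \<exists>g\<in>carrier G. \<pi> g = d"
    and \<pi>_ker: "g \<in> carrier G \<Longrightarrow> \<pi> g = (0, 0) \<longleftrightarrow> g \<in> grp_center G"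
begin

abbreviation "Zc \<equiv> grp_center G"
definition "R = {g \<in> carrier G. snd (\<pi> g) = 0}"
definition "F = {g \<in> carrier G. snd (\<pi> g) = 1}"

lemma Zc_sub: "Zc \<subseteq> carrier G" unfolding grp_center_def by auto
lemma Zc_comm: "z \<in> Zc \<Longrightarrow> g \<in> carrier G \<Longrightarrow> z \<otimes> g = g \<otimes> z" unfolding grp_center_def by auto
lemma Zc_I: "z \<in> carrier G \<Longrightarrow> (\<And>g. g \<in> carrier G \<Longrightarrow> z \<otimes> g = g \<otimes> z) \<Longrightarrow> z \<in> Zc"
  unfolding grp_center_def by auto
lemma one_Zc: "\<one> \<in> Zc" by (rule Zc_I) auto
lemma \<pi>_one: "\<pi> \<one> = (0, 0)" using \<pi>_ker one_Zc by auto
lemma m_pos: "m > 0" using m3 by simp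

lemma RF_cases: "g \<in> carrier G \<Longrightarrow> g \<in> R \<or> g \<in> F"
  using \<pi>_car[of g] unfolding R_def F_def by (cases "\<pi> g") (auto simp: dcar)
lemma RF_disj: "g \<in> R \<Longrightarrow> g \<notin> F" unfolding R_def F_def by auto
lemma R_car: "g \<in> R \<Longrightarrow> g \<in> carrier G" unfolding R_def by auto
lemma F_car: "g \<in> F \<Longrightarrow> g \<in> carrier G" unfolding F_def by auto
lemma Zc_R: "z \<in> Zc \<Longrightarrow> z \<in> R" using \<pi>_ker[of z] subsetD[OF Zc_sub, of z] unfolding R_def by auto

lemma \<pi>_eq_Z: assumes "a \<in> carrier G" "b \<in> carrier G" "\<pi> a = \<pi> b"
  shows "inv a \<otimes> b \<in> Zc"
proof -
  have w: "inv a \<otimes> b \<in> carrier G" using assms by simp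
  have "\<pi> (a \<otimes> (inv a \<otimes> b)) = \<pi> b" using assms by (simp add: m_assoc[symmetric])
  then have eq: "dmul m (\<pi> a) (\<pi> (inv a \<otimes> b)) = dmul m (\<pi> a) (0,0)"
    using assms \<pi>_mult[OF assms(1) w] dmul_unit[OF \<pi>_car[OF assms(1)]] by simp
  then have "\<pi> (inv a \<otimes> b) = (0,0)"
    using dmul_cancel[OF \<pi>_car[OF assms(1)] \<pi>_car[OF w] _ eq] m_pos by (simp add: dcar)
  then show ?thesis using \<pi>_ker w by auto
qed

lemma \<pi>_eq_ex: assumes "a \<in> carrier G" "b \<in> carrier G" "\<pi> a = \<pi> b"
  shows "\<exists>z\<in>Zc. b = a \<otimes> z"
  using \<pi>_eq_Z[OF assms] assms by (intro bexI[of _ "inv a \<otimes> b"]) (auto simp: m_assoc[symmetric])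

lemma \<pi>_eq_comm: assumes "a \<in> carrier G" "b \<in> carrier G" "\<pi> a = \<pi> b"
  shows "a \<otimes> b = b \<otimes> a"
proof -
  obtain z where z: "z \<in> Zc" "b = a \<otimes> z" using \<pi>_eq_ex[OF assms] by blast
  have zc: "z \<in> carrier G" using z Zc_sub by auto
  show ?thesis using z zc assms Zc_comm[OF z(1), of a] by (simp add: m_assoc)
qed

lemma \<pi>_Zmult: "a \<in> carrier G \<Longrightarrow> z \<in> Zc \<Longrightarrow> \<pi> (a \<otimes> z) = \<pi> a"
  using \<pi>_mult[of a z] Zc_sub \<pi>_ker[of z] dmul_unit[OF \<pi>_car[of a]] by auto

lemma \<pi>_inv: assumes "a \<in> carrier G"
  shows "\<pi> (inv a) = (if snd (\<pi> a) = 0 then ((- fst (\<pi> a)) mod int m, 0) else \<pi> a)"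
proof -
  obtain t e where te: "\<pi> a = (t, e)" by (cases "\<pi> a")
  have c: "0 \<le> t" "t < int m" "e = 0 \<or> e = 1" using \<pi>_car[OF assms] te by (auto simp: dcar)
  have "dmul m (\<pi> a) (\<pi> (inv a)) = (0, 0)" using \<pi>_mult[of a "inv a"] assms \<pi>_one by simp
  moreover have "dmul m (\<pi> a) (if e = 0 then ((- t) mod int m, 0) else (t, e)) = (0, 0)"
  proof (cases "e = 0")
    case True
    have "(t + (- t) mod int m) mod int m = 0" by (simp add: mod_add_right_eq)
    then show ?thesis using True te by (simp add: dmul0)
  next
    case False
    then show ?thesis using c te by (simp add: dmul1)
  qed
  moreover have "(if e = 0 then ((- t) mod int m, 0) else (t, e)) \<in> carrier (dihedral m)"
    using c m_pos by (auto simp: dcar)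
  ultimately have "\<pi> (inv a) = (if e = 0 then ((- t) mod int m, 0) else (t, e))"
    using dmul_cancel[OF \<pi>_car[OF assms] \<pi>_car[of "inv a"]] assms by auto
  then show ?thesis using te by auto
qed

lemma \<pi>_conj: assumes k: "k \<in> carrier G" and g: "g \<in> carrier G"
  shows "\<pi> (k \<otimes> g \<otimes> inv k) =
   (if snd (\<pi> k) = 0 then (if snd (\<pi> g) = 0 then \<pi> g else ((fst (\<pi> g) + 2 * fst (\<pi> k)) mod int m, 1))
    else (if snd (\<pi> g) = 0 then ((- fst (\<pi> g)) mod int m, 0) else ((2 * fst (\<pi> k) - fst (\<pi> g)) mod int m, 1)))"
proof -
  obtain t e where te: "\<pi> k = (t, e)" by (cases "\<pi> k")
  obtain j f where jf: "\<pi> g = (j, f)" by (cases "\<pi> g")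
  have c: "0 \<le> t" "t < int m" "e = 0 \<or> e = 1" using \<pi>_car[OF k] te by (auto simp: dcar)
  have d: "0 \<le> j" "j < int m" "f = 0 \<or> f = 1" using \<pi>_car[OF g] jf by (auto simp: dcar)
  have "\<pi> (k \<otimes> g \<otimes> inv k) = dmul m (dmul m (t, e) (j, f)) (\<pi> (inv k))"
    using k g te jf by (simp add: \<pi>_mult)
  also have "\<dots> = dmul m (dmul m (t, e) (j, f)) (if e = 0 then ((- t) mod int m, 0) else (t, e))"
    using \<pi>_inv[OF k] te by simp
  finally have eq: "\<pi> (k \<otimes> g \<otimes> inv k) = dmul m (dmul m (t, e) (j, f)) (if e = 0 then ((- t) mod int m, 0) else (t, e))" .
  show ?thesis
  proof (cases "e = 0")
    case e0: True
    show ?thesis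
    proof (cases "f = 0")
      case True
      have "((t + j) mod int m + (- t) mod int m) mod int m = j"
        using d by (simp add: mod_add_left_eq mod_add_right_eq mod_diff_left_eq)
      then show ?thesis using eq e0 True te jf by (simp add: dmul0)
    next
      case False
      then have f1: "f = 1" using d by auto
      have "((t + j) mod int m - (- t) mod int m) mod int m = (j + 2 * t) mod int m"
        by (simp add: mod_diff_left_eq mod_diff_right_eq mod_add_right_eq algebra_simps)
      then show ?thesis using eq e0 f1 te jf by (simp add: dmul0 dmul1)
    qed
  next
    case e1: False
    then have e1: "e = 1" using c by auto
    show ?thesis
    proof (cases "f = 0")
      case True
      have "((t - j) mod int m - t) mod int m = (- j) mod int m"
        by (simp add: mod_diff_left_eq)
      then show ?thesis using eq e1 True te jf by (simp add: dmul0 dmul1)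
    next
      case False
      then have f1: "f = 1" using d by auto
      have "((t - j) mod int m + t) mod int m = (2 * t - j) mod int m"
        by (simp add: mod_add_left_eq mod_add_right_eq algebra_simps)
      then show ?thesis using eq e1 f1 te jf by (simp add: dmul0 dmul1)
    qed
  qed
qed

lemma conj_snd: "k \<in> carrier G \<Longrightarrow> g \<in> carrier G \<Longrightarrow> snd (\<pi> (k \<otimes> g \<otimes> inv k)) = snd (\<pi> g)"
  using \<pi>_conj[of k g] \<pi>_car[of g] by (cases "\<pi> g") (auto simp: dcar)

lemma snd_mult: "a \<in> carrier G \<Longrightarrow> b \<in> carrier G \<Longrightarrow> snd (\<pi> (a \<otimes> b)) = (snd (\<pi> a) + snd (\<pi> b)) mod 2"
  using \<pi>_mult[of a b] by (cases "\<pi> a"; cases "\<pi> b") (simp add: dmul_def)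

lemma snd_inv: "a \<in> carrier G \<Longrightarrow> snd (\<pi> (inv a)) = snd (\<pi> a)"
  using \<pi>_inv[of a] by auto

lemma snd_01: "a \<in> carrier G \<Longrightarrow> snd (\<pi> a) = 0 \<or> snd (\<pi> a) = 1"
  using \<pi>_car[of a] by (cases "\<pi> a") (auto simp: dcar)

lemma RR: "a \<in> R \<Longrightarrow> b \<in> R \<Longrightarrow> a \<otimes> b \<in> R" unfolding R_def by (auto simp: snd_mult)
lemma R_inv: "a \<in> R \<Longrightarrow> inv a \<in> R" unfolding R_def by (auto simp: snd_inv)
lemma FF1: "a \<in> F \<Longrightarrow> b \<in> F \<Longrightarrow> inv a \<otimes> b \<in> R" unfolding R_def F_def by (auto simp: snd_mult snd_inv)
lemma FF2: "a \<in> F \<Longrightarrow> b \<in> F \<Longrightarrow> a \<otimes> inv b \<in> R" unfolding R_def F_def by (auto simp: snd_mult snd_inv)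

definition "x0 = (SOME x. x \<in> carrier G \<and> \<pi> x = (1, 0))"
lemma x0: "x0 \<in> carrier G" "\<pi> x0 = (1, 0)"
proof -
  have "(1, 0) \<in> carrier (dihedral m)" using m3 by (simp add: dcar)
  then have "\<exists>x. x \<in> carrier G \<and> \<pi> x = (1, 0)" using \<pi>_surj by blast
  then show "x0 \<in> carrier G" "\<pi> x0 = (1, 0)" unfolding x0_def by (metis (mono_tags, lifting) someI_ex)+
qed

lemma \<pi>_pow: "\<pi> (x0 [^] (n::nat)) = (int n mod int m, 0)"
proof (induction n)
  case 0 then show ?case using \<pi>_one by simp
next
  case (Suc n)
  have "\<pi> (x0 [^] Suc n) = dmul m (\<pi> (x0 [^] n)) (\<pi> x0)" using x0 by (simp add: \<pi>_mult)
  also have "\<dots> = ((int n mod int m + 1) mod int m, 0)" using Suc x0 by (simp add: dmul0)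
  also have "\<dots> = (int (Suc n) mod int m, 0)" by (simp add: mod_add_left_eq mod_add_right_eq add.commute)
  finally show ?case .
qed

lemma R_form: assumes "g \<in> R" shows "\<exists>n z. z \<in> Zc \<and> g = x0 [^] (n::nat) \<otimes> z"
proof -
  obtain i where i: "\<pi> g = (i, 0)" using assms unfolding R_def by (cases "\<pi> g") auto
  have c: "0 \<le> i" "i < int m" using \<pi>_car[of g] assms i R_car by (auto simp: dcar)
  have "\<pi> (x0 [^] nat i) = \<pi> g" using \<pi>_pow[of "nat i"] i c by simp
  then obtain z where "z \<in> Zc" "g = x0 [^] nat i \<otimes> z" using \<pi>_eq_ex[of "x0 [^] nat i" g] x0 assms R_car by auto
  then show ?thesis by blast
qed

lemma R_comm: assumes "g \<in> R" "h \<in> R" shows "g \<otimes> h = h \<otimes> g"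
proof -
  obtain a z1 where 1: "z1 \<in> Zc" "g = x0 [^] (a::nat) \<otimes> z1" using R_form[OF assms(1)] by blast
  obtain b z2 where 2: "z2 \<in> Zc" "h = x0 [^] (b::nat) \<otimes> z2" using R_form[OF assms(2)] by blast
  have z: "z1 \<in> carrier G" "z2 \<in> carrier G" using 1 2 Zc_sub by auto
  have P: "x0 [^] a \<in> carrier G" "x0 [^] b \<in> carrier G" using x0 by auto
  have PQ: "x0 [^] a \<otimes> x0 [^] b = x0 [^] b \<otimes> x0 [^] a" using x0 by (simp add: nat_pow_mult add.commute)
  have "g \<otimes> h = x0 [^] a \<otimes> (z1 \<otimes> (x0 [^] b \<otimes> z2))" using 1 2 z P by (simp add: m_assoc)
  also have "\<dots> = x0 [^] a \<otimes> ((x0 [^] b \<otimes> z2) \<otimes> z1)" using Zc_comm[OF 1(1), of "x0 [^] b \<otimes> z2"] z P by simp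
  also have "\<dots> = (x0 [^] a \<otimes> x0 [^] b) \<otimes> (z2 \<otimes> z1)" using z P by (simp add: m_assoc)
  also have "\<dots> = (x0 [^] b \<otimes> x0 [^] a) \<otimes> (z1 \<otimes> z2)" using PQ Zc_comm[OF 1(1), of z2] z by simp
  also have "\<dots> = x0 [^] b \<otimes> ((x0 [^] a \<otimes> z1) \<otimes> z2)" using z P by (simp add: m_assoc)
  also have "\<dots> = x0 [^] b \<otimes> (z2 \<otimes> (x0 [^] a \<otimes> z1))" using Zc_comm[OF 2(1), of "x0 [^] a \<otimes> z1"] z P by simp
  also have "\<dots> = h \<otimes> g" using 1 2 z P by (simp add: m_assoc)
  finally show ?thesis .
qed

lemma NC: assumes k: "k \<in> R" "k \<notin> Zc" and l: "l \<in> F" shows "k \<otimes> l \<noteq> l \<otimes> k"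
proof
  assume kl: "k \<otimes> l = l \<otimes> k"
  have kc: "k \<in> carrier G" and lc: "l \<in> carrier G" using k l R_car F_car by auto
  have "k \<in> Zc"
  proof (rule Zc_I[OF kc])
    fix a assume a: "a \<in> carrier G"
    show "k \<otimes> a = a \<otimes> k"
    proof (cases "a \<in> R")
      case True then show ?thesis using R_comm k by auto
    next
      case False
      then have aF: "a \<in> F" using RF_cases a by auto
      define r where "r = inv l \<otimes> a"
      have r: "r \<in> R" "r \<in> carrier G" using FF1[OF l aF] unfolding r_def by (auto simp: R_car)
      have ar: "a = l \<otimes> r" unfolding r_def using lc a by (simp add: m_assoc[symmetric])
      have "k \<otimes> a = (k \<otimes> l) \<otimes> r" using ar kc lc r by (simp add: m_assoc)
      also have "\<dots> = l \<otimes> (k \<otimes> r)" using kl kc lc r by (simp add: m_assoc)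
      also have "\<dots> = l \<otimes> (r \<otimes> k)" using R_comm[OF k(1) r(1)] by simp
      also have "\<dots> = a \<otimes> k" using ar kc lc r by (simp add: m_assoc)
      finally show ?thesis .
    qed
  qed
  then show False using k by simp
qed

lemma inv_cancel_l [simp]: "a \<in> carrier G \<Longrightarrow> b \<in> carrier G \<Longrightarrow> inv a \<otimes> (a \<otimes> b) = b"
  by (simp add: m_assoc[symmetric])
lemma inv_cancel_l2 [simp]: "a \<in> carrier G \<Longrightarrow> b \<in> carrier G \<Longrightarrow> a \<otimes> (inv a \<otimes> b) = b"
  by (simp add: m_assoc[symmetric])

lemma cc_sub: "g \<in> carrier G \<Longrightarrow> conj_class G g \<subseteq> carrier G"
  unfolding conj_class_def by auto

lemma cc_self: "g \<in> carrier G \<Longrightarrow> g \<in> conj_class G g"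
  unfolding conj_class_def by (auto intro!: exI[of _ \<one>])

lemma cc_mem: "x \<in> conj_class G a \<longleftrightarrow> (\<exists>k\<in>carrier G. x = k \<otimes> a \<otimes> inv k)"
  unfolding conj_class_def by auto

lemma cc_trans: assumes a: "a \<in> carrier G" and x: "x \<in> conj_class G a"
  shows "conj_class G x = conj_class G a"
proof -
  obtain k where k: "k \<in> carrier G" "x = k \<otimes> a \<otimes> inv k" using x cc_mem by blast
  have xc: "x \<in> carrier G" using k a by simp
  show ?thesis
  proof
    show "conj_class G x \<subseteq> conj_class G a"
    proof
      fix y assume "y \<in> conj_class G x"
      then obtain h where h: "h \<in> carrier G" "y = h \<otimes> x \<otimes> inv h" using cc_mem by blast
      have "y = (h \<otimes> k) \<otimes> a \<otimes> inv (h \<otimes> k)" using h k a by (simp add: m_assoc inv_mult_group)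
      then show "y \<in> conj_class G a" using h k by (auto simp: cc_mem)
    qed
  next
    show "conj_class G a \<subseteq> conj_class G x"
    proof
      fix y assume "y \<in> conj_class G a"
      then obtain h where h: "h \<in> carrier G" "y = h \<otimes> a \<otimes> inv h" using cc_mem by blast
      have "(h \<otimes> inv k) \<otimes> x \<otimes> inv (h \<otimes> inv k) = h \<otimes> (inv k \<otimes> k) \<otimes> a \<otimes> (inv k \<otimes> k) \<otimes> inv h"
        using h k a by (simp add: m_assoc inv_mult_group)
      also have "\<dots> = y" using h k a by simp
      finally show "y \<in> conj_class G x" using h k by (auto simp: cc_mem intro!: bexI[of _ "h \<otimes> inv k"])
    qed
  qed
qed

lemma cc_disj: assumes "a \<in> carrier G" "b \<in> carrier G" "conj_class G a \<noteq> conj_class G b"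
  shows "conj_class G a \<inter> conj_class G b = {}"
  using cc_trans assms by blast

lemma cc_nonZ: assumes g: "g \<in> carrier G" "g \<notin> Zc" and l: "l \<in> conj_class G g" shows "l \<notin> Zc"
proof
  assume lZ: "l \<in> Zc"
  obtain k where k: "k \<in> carrier G" "l = k \<otimes> g \<otimes> inv k" using l cc_mem by blast
  have lc: "l \<in> carrier G" using lZ Zc_sub by auto
  have "g = inv k \<otimes> l \<otimes> k" using k g by (simp add: m_assoc)
  also have "\<dots> = inv k \<otimes> (l \<otimes> k)" using k lc by (simp add: m_assoc)
  also have "\<dots> = inv k \<otimes> (k \<otimes> l)" using Zc_comm[OF lZ k(1)] by simp
  also have "\<dots> = l" using k lc by (simp add: m_assoc[symmetric])
  finally show False using g lZ by simp
qed

lemma cc_R: "g \<in> R \<Longrightarrow> conj_class G g \<subseteq> R"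
  unfolding R_def using conj_snd by (auto simp: cc_mem)
lemma cc_F: "g \<in> F \<Longrightarrow> conj_class G g \<subseteq> F"
  unfolding F_def using conj_snd by (auto simp: cc_mem)

lemma cc_parity: assumes ev: "even m" and g: "g \<in> F" and l: "l \<in> conj_class G g"
  shows "fst (\<pi> l) mod 2 = fst (\<pi> g) mod 2"
proof -
  obtain k where k: "k \<in> carrier G" "l = k \<otimes> g \<otimes> inv k" using l cc_mem by blast
  have gc: "g \<in> carrier G" and g1: "snd (\<pi> g) = 1" using g unfolding F_def by auto
  have 2: "(2::int) dvd int m" using ev by simp
  show ?thesis
  proof (cases "snd (\<pi> k) = 0")
    case True
    then have "fst (\<pi> l) = (fst (\<pi> g) + 2 * fst (\<pi> k)) mod int m" using \<pi>_conj[OF k(1) gc] k g1 by simp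
    then show ?thesis using 2 by (simp add: mod_mod_cancel)
  next
    case False
    then have "fst (\<pi> l) = (2 * fst (\<pi> k) - fst (\<pi> g)) mod int m" using \<pi>_conj[OF k(1) gc] k g1 by simp
    then show ?thesis using 2 by (simp add: mod_mod_cancel) presburger
  qed
qed

lemma cc_reach: assumes g: "g \<in> F"
  shows "\<exists>l\<in>conj_class G g. \<pi> l = ((fst (\<pi> g) + 2 * t) mod int m, 1)"
proof -
  have "(t mod int m, 0) \<in> carrier (dihedral m)" using m_pos by (simp add: dcar)
  then obtain k where k: "k \<in> carrier G" "\<pi> k = (t mod int m, 0)" using \<pi>_surj by blast
  have gc: "g \<in> carrier G" and g1: "snd (\<pi> g) = 1" using g unfolding F_def by auto
  have "\<pi> (k \<otimes> g \<otimes> inv k) = ((fst (\<pi> g) + 2 * (t mod int m)) mod int m, 1)"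
    using \<pi>_conj[OF k(1) gc] k g1 by simp
  also have "\<dots> = ((fst (\<pi> g) + 2 * t) mod int m, 1)"
    by (metis mod_add_right_eq mod_mult_right_eq)
  finally have eq: "\<pi> (k \<otimes> g \<otimes> inv k) = ((fst (\<pi> g) + 2 * t) mod int m, 1)" .
  have "k \<otimes> g \<otimes> inv k \<in> conj_class G g" using k by (auto simp: cc_mem)
  then show ?thesis using eq by blast
qed

lemma finZ: "finite Zc" using finite_subset[OF Zc_sub finG] .
lemma cardZ_pos: "card Zc > 0" using finZ one_Zc card_gt_0_iff by blast

lemma card_fiber: assumes d: "d \<in> carrier (dihedral m)"
  shows "card {g \<in> carrier G. \<pi> g = d} = card Zc"
proof -
  obtain g0 where g0: "g0 \<in> carrier G" "\<pi> g0 = d" using \<pi>_surj[OF d] by blast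
  have "(\<lambda>z. g0 \<otimes> z) ` Zc = {g \<in> carrier G. \<pi> g = d}"
  proof
    show "(\<lambda>z. g0 \<otimes> z) ` Zc \<subseteq> {g \<in> carrier G. \<pi> g = d}"
      using g0 \<pi>_Zmult Zc_sub by auto
    show "{g \<in> carrier G. \<pi> g = d} \<subseteq> (\<lambda>z. g0 \<otimes> z) ` Zc"
    proof
      fix g assume "g \<in> {g \<in> carrier G. \<pi> g = d}"
      then have g: "g \<in> carrier G" "\<pi> g = d" by auto
      then obtain z where "z \<in> Zc" "g = g0 \<otimes> z" using \<pi>_eq_ex[of g0 g] g0 by auto
      then show "g \<in> (\<lambda>z. g0 \<otimes> z) ` Zc" by auto
    qed
  qed
  moreover have "inj_on (\<lambda>z. g0 \<otimes> z) Zc"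
    by (rule inj_onI) (metis g0(1) l_cancel subsetD[OF Zc_sub])
  ultimately show ?thesis using card_image by fastforce
qed

lemma card_preimage: assumes "T \<subseteq> carrier (dihedral m)"
  shows "card {g \<in> carrier G. \<pi> g \<in> T} = card Zc * card T"
proof -
  have fT: "finite T" using assms by (rule finite_subset) (simp add: dihedral_def)
  have "card {g \<in> carrier G. \<pi> g \<in> T} = card Zc * card T"
    apply (rule card_fibers[where f = \<pi>])
    using finG fT apply auto[3]
    subgoal for b
    proof -
      assume b: "b \<in> T"
      have "{a \<in> {g \<in> carrier G. \<pi> g \<in> T}. \<pi> a = b} = {g \<in> carrier G. \<pi> g = b}" using b by auto
      then show ?thesis using card_fiber[of b] assms b by auto
    qed
    done
  then show ?thesis .
qed

lemma RR_conj: "k \<in> R \<Longrightarrow> g \<in> R \<Longrightarrow> k \<otimes> g \<otimes> inv k = g"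
  using R_comm[of k g] R_car by (simp add: m_assoc)

lemma conj_eq_comm: assumes "a \<in> carrier G" "b \<in> carrier G" "x \<in> carrier G"
    and "a \<otimes> x \<otimes> inv a = b \<otimes> x \<otimes> inv b"
  shows "(inv b \<otimes> a) \<otimes> x = x \<otimes> (inv b \<otimes> a)"
proof -
  have "inv b \<otimes> (a \<otimes> x \<otimes> inv a) \<otimes> a = inv b \<otimes> (b \<otimes> x \<otimes> inv b) \<otimes> a" using assms(4) by simp
  then show ?thesis using assms(1-3) by (simp add: m_assoc)
qed

lemma Zconj: "z \<in> Zc \<Longrightarrow> h \<in> carrier G \<Longrightarrow> z \<otimes> h \<otimes> inv z = h"
  using Zc_comm[of z h] Zc_sub by (auto simp: m_assoc)

definition "c0 = (SOME c. c \<in> carrier G \<and> \<pi> c = (0, 1))"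
lemma c0': "c0 \<in> F \<and> \<pi> c0 = (0, 1)"
proof -
  have "(0, 1) \<in> carrier (dihedral m)" using m3 by (simp add: dcar)
  then have "\<exists>x. x \<in> carrier G \<and> \<pi> x = (0, 1)" using \<pi>_surj by blast
  then have "c0 \<in> carrier G \<and> \<pi> c0 = (0, 1)" unfolding c0_def by (metis (mono_tags, lifting) someI_ex)
  then show ?thesis unfolding F_def by auto
qed
lemma c0: "c0 \<in> F" using c0' by simp

lemma cc_size_R: assumes g: "g \<in> R" "g \<notin> Zc" shows "card (conj_class G g) = 2"
proof -
  have gc: "g \<in> carrier G" using g R_car by auto
  have cc: "c0 \<in> carrier G" using c0 F_car by auto
  have "conj_class G g = {g, c0 \<otimes> g \<otimes> inv c0}"
  proof
    show "conj_class G g \<subseteq> {g, c0 \<otimes> g \<otimes> inv c0}"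
    proof
      fix y assume "y \<in> conj_class G g"
      then obtain k where k: "k \<in> carrier G" "y = k \<otimes> g \<otimes> inv k" using cc_mem by blast
      show "y \<in> {g, c0 \<otimes> g \<otimes> inv c0}"
      proof (cases "k \<in> R")
        case True then show ?thesis using RR_conj g k by auto
      next
        case False
        then have kF: "k \<in> F" using RF_cases k by auto
        define r where "r = inv c0 \<otimes> k"
        have r: "r \<in> R" "r \<in> carrier G" using FF1[OF c0 kF] unfolding r_def by (auto simp: R_car)
        have kr: "k = c0 \<otimes> r" unfolding r_def using cc k by simp
        have "y = c0 \<otimes> (r \<otimes> g \<otimes> inv r) \<otimes> inv c0" using k kr cc r gc by (simp add: m_assoc inv_mult_group)
        also have "\<dots> = c0 \<otimes> g \<otimes> inv c0" using RR_conj[OF r(1) g(1)] by simp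
        finally show ?thesis by simp
      qed
    qed
    show "{g, c0 \<otimes> g \<otimes> inv c0} \<subseteq> conj_class G g" using cc_self[OF gc] cc by (auto simp: cc_mem)
  qed
  moreover have "g \<noteq> c0 \<otimes> g \<otimes> inv c0"
  proof
    assume "g = c0 \<otimes> g \<otimes> inv c0"
    then have "g \<otimes> c0 = c0 \<otimes> g \<otimes> inv c0 \<otimes> c0" by simp
    then have "g \<otimes> c0 = c0 \<otimes> g" using gc cc by (simp add: m_assoc)
    then show False using NC[OF g c0] by simp
  qed
  ultimately show ?thesis by simp
qed

lemma card_R: "card R = m * card Zc"
proof -
  have "R = {g \<in> carrier G. \<pi> g \<in> (\<lambda>i. (i, 0)) ` {0..<int m}}"
  proof
    show "R \<subseteq> {g \<in> carrier G. \<pi> g \<in> (\<lambda>i. (i, 0)) ` {0..<int m}}"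
    proof
      fix g assume g: "g \<in> R"
      obtain i e where ie: "\<pi> g = (i, e)" by (cases "\<pi> g")
      have "0 \<le> i" "i < int m" "e = 0" using \<pi>_car[of g] g ie unfolding R_def by (auto simp: dcar)
      then show "g \<in> {g \<in> carrier G. \<pi> g \<in> (\<lambda>i. (i, 0)) ` {0..<int m}}" using g ie R_car by auto
    qed
  qed (auto simp: R_def)
  moreover have "card ((\<lambda>i::int. (i, 0::int)) ` {0..<int m}) = m"
    by (subst card_image) (auto simp: inj_on_def)
  moreover have "(\<lambda>i::int. (i, 0::int)) ` {0..<int m} \<subseteq> carrier (dihedral m)" by (auto simp: dcar)
  ultimately show ?thesis using card_preimage by simp
qed

lemma cc_size_F: assumes h: "h \<in> F" shows "card (conj_class G h) = m"
proof -
  have hc: "h \<in> carrier G" using h F_car by auto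
  define \<phi> where "\<phi> r = r \<otimes> h \<otimes> inv r" for r
  have img: "\<phi> ` R = conj_class G h"
  proof
    show "\<phi> ` R \<subseteq> conj_class G h"
    proof
      fix y assume "y \<in> \<phi> ` R"
      then obtain r where r: "r \<in> R" "y = \<phi> r" by auto
      then show "y \<in> conj_class G h" unfolding \<phi>_def cc_mem using R_car[OF r(1)] by blast
    qed
    show "conj_class G h \<subseteq> \<phi> ` R"
    proof
      fix y assume "y \<in> conj_class G h"
      then obtain k where k: "k \<in> carrier G" "y = k \<otimes> h \<otimes> inv k" using cc_mem by blast
      show "y \<in> \<phi> ` R"
      proof (cases "k \<in> R")
        case True then show ?thesis using k unfolding \<phi>_def by auto
      next
        case False
        then have kF: "k \<in> F" using RF_cases k by auto
        define r where "r = k \<otimes> inv h"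
        have r: "r \<in> R" "r \<in> carrier G" using FF2[OF kF h] unfolding r_def by (auto simp: R_car)
        have kr: "k = r \<otimes> h" unfolding r_def using hc k by (simp add: m_assoc)
        have "y = r \<otimes> h \<otimes> inv r" using k kr hc r by (simp add: m_assoc inv_mult_group)
        then show ?thesis using r unfolding \<phi>_def by auto
      qed
    qed
  qed
  have fib: "card {r \<in> R. \<phi> r = b} = card Zc" if b: "b \<in> conj_class G h" for b
  proof -
    obtain r0 where r0: "r0 \<in> R" "b = \<phi> r0" using b img by auto
    have r0c: "r0 \<in> carrier G" using r0 R_car by auto
    have "(\<lambda>z. r0 \<otimes> z) ` Zc = {r \<in> R. \<phi> r = b}"
    proof
      show "(\<lambda>z. r0 \<otimes> z) ` Zc \<subseteq> {r \<in> R. \<phi> r = b}"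
      proof
        fix y assume "y \<in> (\<lambda>z. r0 \<otimes> z) ` Zc"
        then obtain z where z: "z \<in> Zc" "y = r0 \<otimes> z" by auto
        have zc: "z \<in> carrier G" using z Zc_sub by auto
        have "y \<in> R" using RR[OF r0(1) Zc_R[OF z(1)]] z by simp
        moreover have "\<phi> y = r0 \<otimes> (z \<otimes> h \<otimes> inv z) \<otimes> inv r0" unfolding \<phi>_def using z zc r0c hc
          by (simp add: m_assoc inv_mult_group)
        then have "\<phi> y = b" using Zconj[OF z(1) hc] r0 unfolding \<phi>_def by simp
        ultimately show "y \<in> {r \<in> R. \<phi> r = b}" by simp
      qed
      show "{r \<in> R. \<phi> r = b} \<subseteq> (\<lambda>z. r0 \<otimes> z) ` Zc"
      proof
        fix r assume "r \<in> {r \<in> R. \<phi> r = b}"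
        then have r: "r \<in> R" "\<phi> r = \<phi> r0" using r0 by auto
        have rc: "r \<in> carrier G" using r R_car by auto
        define w where "w = inv r0 \<otimes> r"
        have wR: "w \<in> R" unfolding w_def using RR[OF R_inv[OF r0(1)] r(1)] .
        have "w \<otimes> h = h \<otimes> w" unfolding w_def using conj_eq_comm[OF rc r0c hc] r(2) unfolding \<phi>_def by simp
        then have "w \<in> Zc" using NC[OF wR _ h] by auto
        moreover have "r = r0 \<otimes> w" unfolding w_def using rc r0c by simp
        ultimately show "r \<in> (\<lambda>z. r0 \<otimes> z) ` Zc" by auto
      qed
    qed
    moreover have "inj_on (\<lambda>z. r0 \<otimes> z) Zc"
      by (rule inj_onI) (metis r0c l_cancel subsetD[OF Zc_sub])
    ultimately show ?thesis using card_image by fastforce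
  qed
  have "card R = card Zc * card (conj_class G h)"
  proof (rule card_fibers[where f = \<phi>])
    show "finite R" using finG unfolding R_def by simp
    show "finite (conj_class G h)" using finite_subset[OF cc_sub[OF hc] finG] .
    show "\<phi> ` R \<subseteq> conj_class G h" using img by simp
  qed (use fib in auto)
  then show ?thesis using card_R cardZ_pos by simp
qed

lemma adj_RR: assumes "g \<in> R" "h \<in> R" shows "\<not> NCCC_adj G (conj_class G g) (conj_class G h)"
  unfolding NCCC_adj_def using cc_self[OF R_car[OF assms(1)]] cc_self[OF R_car[OF assms(2)]] R_comm[OF assms] by blast

lemma adj_RF: assumes g: "g \<in> R" "g \<notin> Zc" and h: "h \<in> F"
  shows "NCCC_adj G (conj_class G g) (conj_class G h)" "NCCC_adj G (conj_class G h) (conj_class G g)"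
proof -
  have gc: "g \<in> carrier G" and hc: "h \<in> carrier G" using g h R_car F_car by auto
  have ne: "conj_class G g \<noteq> conj_class G h"
    using cc_self[OF gc] cc_F[OF h] RF_disj[OF g(1)] by auto
  have nc: "k \<otimes> l \<noteq> l \<otimes> k" if "k \<in> conj_class G g" "l \<in> conj_class G h" for k l
  proof -
    have "k \<in> R" "k \<notin> Zc" using that(1) cc_R[OF g(1)] cc_nonZ[OF gc g(2)] by auto
    moreover have "l \<in> F" using that(2) cc_F[OF h] by auto
    ultimately show ?thesis using NC by blast
  qed
  show "NCCC_adj G (conj_class G g) (conj_class G h)" unfolding NCCC_adj_def using ne nc by blast
  show "NCCC_adj G (conj_class G h) (conj_class G g)" unfolding NCCC_adj_def using ne nc by metis
qed

lemma adj_FF_same: assumes g: "g \<in> F" and h: "h \<in> F"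
    and t: "(fst (\<pi> h) + 2 * t) mod int m = fst (\<pi> g)"
  shows "\<not> NCCC_adj G (conj_class G g) (conj_class G h)"
proof -
  obtain l where l: "l \<in> conj_class G h" "\<pi> l = ((fst (\<pi> h) + 2 * t) mod int m, 1)" using cc_reach[OF h] by blast
  have "\<pi> l = \<pi> g" using l t g unfolding F_def by (cases "\<pi> g") auto
  moreover have "l \<in> carrier G" "g \<in> carrier G" using l cc_sub[OF F_car[OF h]] g F_car by auto
  ultimately have "g \<otimes> l = l \<otimes> g" using \<pi>_eq_comm by metis
  then show ?thesis unfolding NCCC_adj_def using cc_self[OF F_car[OF g]] l by blast
qed

lemma adj_FF_diff: assumes ev: "even m" and g: "g \<in> F" and h: "h \<in> F"
    and par: "fst (\<pi> g) mod 2 \<noteq> fst (\<pi> h) mod 2"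
  shows "NCCC_adj G (conj_class G g) (conj_class G h)"
proof -
  have gc: "g \<in> carrier G" and hc: "h \<in> carrier G" using g h F_car by auto
  have ne: "conj_class G g \<noteq> conj_class G h"
    using cc_self[OF hc] cc_parity[OF ev g, of h] par by auto
  have nc: "k \<otimes> l \<noteq> l \<otimes> k" if k: "k \<in> conj_class G g" and l: "l \<in> conj_class G h" for k l
  proof
    assume kl: "k \<otimes> l = l \<otimes> k"
    have kF: "k \<in> F" and lF: "l \<in> F" using k l cc_F g h by auto
    have kc: "k \<in> carrier G" and lc: "l \<in> carrier G" using kF lF F_car by auto
    have pk: "fst (\<pi> k) mod 2 \<noteq> fst (\<pi> l) mod 2"
      using cc_parity[OF ev g k] cc_parity[OF ev h l] par by simp
    define r where "r = inv k \<otimes> l"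
    have r: "r \<in> R" "r \<in> carrier G" unfolding r_def using FF1[OF kF lF] R_car by auto
    have lr: "l = k \<otimes> r" unfolding r_def using kc lc by simp
    have "k \<otimes> (k \<otimes> r) = k \<otimes> (r \<otimes> k)" using kl lr kc r by (simp add: m_assoc)
    then have rk: "r \<otimes> k = k \<otimes> r" using kc r by simp
    show False
    proof (cases "r \<in> Zc")
      case True
      then have "\<pi> l = \<pi> k" using lr \<pi>_Zmult kc by simp
      then show False using pk by simp
    next
      case False
      then show False using NC[OF r(1) False kF] rk by simp
    qed
  qed
  show ?thesis unfolding NCCC_adj_def using ne nc by blast
qed

lemma V_eq: "NCCC_vertices G = conj_class G ` (R - Zc) \<union> conj_class G ` F"
proof -
  have "carrier G - Zc = (R - Zc) \<union> F"
    using RF_cases Zc_R RF_disj R_car F_car by blast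
  then show ?thesis unfolding NCCC_vertices_def by auto
qed

lemma finV: "finite (NCCC_vertices G)" unfolding NCCC_vertices_def using finG by simp

lemma odd_case: assumes "odd m" shows "Q_integral (NCCC_vertices G) (NCCC_adj G)"
proof -
  define P where "P = conj_class G ` (R - Zc)"
  define S where "S = conj_class G ` F"
  have disj: "P \<inter> S = {}"
  proof -
    have "conj_class G g \<noteq> conj_class G h" if "g \<in> R" "h \<in> F" for g h
      using cc_self[OF R_car[OF that(1)]] cc_F[OF that(2)] RF_disj[OF that(1)] by auto
    then show ?thesis unfolding P_def S_def by blast
  qed
  have reach: "\<exists>t. (fst (\<pi> h) + 2 * t) mod int m = fst (\<pi> g)" if "g \<in> F" for g h
  proof -
    have c: "0 \<le> fst (\<pi> g)" "fst (\<pi> g) < int m" using \<pi>_car[OF F_car[OF that]] by (cases "\<pi> g"; auto simp: dcar)+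
    define x where "x = fst (\<pi> g) - fst (\<pi> h)"
    obtain q where q: "int m + 1 = 2 * q" using assms by (metis even_plus_one_iff even_of_nat dvdE)
    have xq: "x * (int m + 1) = 2 * (x * q)" unfolding q by (simp add: algebra_simps)
    have "(fst (\<pi> h) + 2 * (x * q)) mod int m = (fst (\<pi> h) + x + x * int m) mod int m"
      unfolding xq[symmetric] by (simp add: algebra_simps)
    also have "\<dots> = (fst (\<pi> h) + x) mod int m" by simp
    also have "\<dots> = fst (\<pi> g)" unfolding x_def using c by simp
    finally show ?thesis by blast
  qed
  show ?thesis
  proof (rule bipartite_Q_integral[OF finV, of P S])
    show "NCCC_vertices G = P \<union> S" unfolding P_def S_def by (rule V_eq)
    show "P \<inter> S = {}" by (rule disj)
    fix u w assume u: "u \<in> NCCC_vertices G" and w: "w \<in> NCCC_vertices G"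
    consider g where "g \<in> R" "g \<notin> Zc" "u = conj_class G g" | g where "g \<in> F" "u = conj_class G g"
      using u V_eq by blast
    note uc = this
    consider h where "h \<in> R" "h \<notin> Zc" "w = conj_class G h" | h where "h \<in> F" "w = conj_class G h"
      using w V_eq by blast
    note wc = this
    show "NCCC_adj G u w \<longleftrightarrow> (u \<in> P \<and> w \<in> S) \<or> (u \<in> S \<and> w \<in> P)"
    proof (cases rule: uc)
      case (1 g)
      then have "u \<in> P" unfolding P_def by auto
      then have uP: "u \<in> P" "u \<notin> S" using disj by auto
      show ?thesis
      proof (cases rule: wc)
        case (1 h)
        then have "w \<in> P" unfolding P_def by auto
        then have "w \<in> P" "w \<notin> S" using disj by auto
        then show ?thesis using adj_RR \<open>g \<in> R\<close> \<open>h \<in> R\<close> \<open>u = _\<close> \<open>w = _\<close> uP by auto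
      next
        case (2 h)
        then have "w \<in> S" unfolding S_def by auto
        then show ?thesis using adj_RF \<open>g \<in> R\<close> \<open>g \<notin> Zc\<close> \<open>h \<in> F\<close> \<open>u = _\<close> \<open>w = _\<close> uP by auto
      qed
    next
      case (2 g)
      then have "u \<in> S" unfolding S_def by auto
      then have uS: "u \<in> S" "u \<notin> P" using disj by auto
      show ?thesis
      proof (cases rule: wc)
        case (1 h)
        then have "w \<in> P" unfolding P_def by auto
        then show ?thesis using adj_RF \<open>h \<in> R\<close> \<open>h \<notin> Zc\<close> \<open>g \<in> F\<close> \<open>u = _\<close> \<open>w = _\<close> uS by auto
      next
        case (2 h)
        then have "w \<in> S" unfolding S_def by auto
        then have "w \<in> S" "w \<notin> P" using disj by auto
        moreover obtain t where "(fst (\<pi> h) + 2 * t) mod int m = fst (\<pi> g)" using reach[OF \<open>g \<in> F\<close>] by blast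
        ultimately show ?thesis using adj_FF_same \<open>h \<in> F\<close> \<open>g \<in> F\<close> \<open>u = _\<close> \<open>w = _\<close> uS by auto
      qed
    qed
  qed
qed

lemma card_cc_partition:
  assumes "A \<subseteq> carrier G" "\<And>g. g \<in> A \<Longrightarrow> conj_class G g \<subseteq> A"
    and "\<And>g. g \<in> A \<Longrightarrow> card (conj_class G g) = k"
  shows "k * card (conj_class G ` A) = card A"
proof -
  have U: "\<Union>(conj_class G ` A) = A" using assms(1,2) cc_self by blast
  have fA: "finite A" using assms(1) finG finite_subset by blast
  have "k * card (conj_class G ` A) = card (\<Union>(conj_class G ` A))"
    apply (rule card_partition)
    using fA U assms(3) apply auto[3]
    using cc_disj assms(1) by blast
  then show ?thesis using U by simp
qed

lemma even_case: assumes ev: "even m" shows "\<not> Q_integral (NCCC_vertices G) (NCCC_adj G)"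
proof -
  define F1 where "F1 = {g \<in> F. fst (\<pi> g) mod 2 = 0}"
  define F2 where "F2 = {g \<in> F. fst (\<pi> g) mod 2 = 1}"
  define I where "I = conj_class G ` (R - Zc)"
  define A where "A = conj_class G ` F1"
  define B where "B = conj_class G ` F2"
  have FF: "F = F1 \<union> F2" unfolding F1_def F2_def by auto
  have V: "NCCC_vertices G = I \<union> A \<union> B" unfolding I_def A_def B_def V_eq FF by auto
  have RFne: "conj_class G g \<noteq> conj_class G h" if "g \<in> R" "h \<in> F" for g h
    using cc_self[OF R_car[OF that(1)]] cc_F[OF that(2)] RF_disj[OF that(1)] by auto
  have F12ne: "conj_class G g \<noteq> conj_class G h" if "g \<in> F1" "h \<in> F2" for g h
    using cc_self[OF F_car, of h] cc_parity[OF ev, of g h] that unfolding F1_def F2_def by auto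
  have dIA: "I \<inter> A = {}" unfolding I_def A_def F1_def using RFne by blast
  have dIB: "I \<inter> B = {}" unfolding I_def B_def F2_def using RFne by blast
  have dAB: "A \<inter> B = {}" unfolding A_def B_def using F12ne by blast
  have h2: "(2::int) dvd int m" using ev by simp
  define M where "M = int m div 2"
  have mM: "int m = 2 * M" unfolding M_def using h2 by simp
  have cT: "card ((\<lambda>t::int. (2 * t + c, 1::int)) ` {0..<M}) = m div 2" for c :: int
  proof -
    have "card ((\<lambda>t::int. (2 * t + c, 1::int)) ` {0..<M}) = card {0..<M}" by (subst card_image) (auto simp: inj_on_def)
    also have "\<dots> = m div 2" unfolding M_def by simp
    finally show ?thesis .
  qed
  have F1eq: "F1 = {g \<in> carrier G. \<pi> g \<in> (\<lambda>t::int. (2 * t + 0, 1::int)) ` {0..<M}}"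
  proof
    show "F1 \<subseteq> {g \<in> carrier G. \<pi> g \<in> (\<lambda>t::int. (2 * t + 0, 1::int)) ` {0..<M}}"
    proof
      fix g assume g: "g \<in> F1"
      obtain i e where ie: "\<pi> g = (i, e)" by (cases "\<pi> g")
      have "0 \<le> i" "i < int m" "e = 1" "i mod 2 = 0" using \<pi>_car[of g] g ie unfolding F1_def F_def by (auto simp: dcar)
      then have "(i, e) = (2 * (i div 2) + 0, 1) \<and> i div 2 \<in> {0..<M}" using mM
        by (intro conjI) (simp_all, presburger+)
      then show "g \<in> {g \<in> carrier G. \<pi> g \<in> (\<lambda>t::int. (2 * t + 0, 1::int)) ` {0..<M}}"
        using g ie unfolding F1_def F_def by (auto intro!: image_eqI[of _ _ "i div 2"])
    qed
  qed (auto simp: F1_def F_def)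
  have F2eq: "F2 = {g \<in> carrier G. \<pi> g \<in> (\<lambda>t::int. (2 * t + 1, 1::int)) ` {0..<M}}"
  proof
    show "F2 \<subseteq> {g \<in> carrier G. \<pi> g \<in> (\<lambda>t::int. (2 * t + 1, 1::int)) ` {0..<M}}"
    proof
      fix g assume g: "g \<in> F2"
      obtain i e where ie: "\<pi> g = (i, e)" by (cases "\<pi> g")
      have "0 \<le> i" "i < int m" "e = 1" "i mod 2 = 1" using \<pi>_car[of g] g ie unfolding F2_def F_def by (auto simp: dcar)
      then have "(i, e) = (2 * (i div 2) + 1, 1) \<and> i div 2 \<in> {0..<M}" using mM
        by (intro conjI) (simp_all, presburger+)
      then show "g \<in> {g \<in> carrier G. \<pi> g \<in> (\<lambda>t::int. (2 * t + 1, 1::int)) ` {0..<M}}"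
        using g ie unfolding F2_def F_def by (auto intro!: image_eqI[of _ _ "i div 2"])
    qed
  qed (auto simp: F2_def F_def)
  have Tsub: "(\<lambda>t::int. (2 * t + c, 1::int)) ` {0..<M} \<subseteq> carrier (dihedral m)" if "c = 0 \<or> c = 1" for c :: int
    using that mM by (auto simp: dcar)
  have cF1: "card F1 = card Zc * (m div 2)" unfolding F1eq using card_preimage[OF Tsub[of 0]] cT[of 0] by simp
  have cF2: "card F2 = card Zc * (m div 2)" unfolding F2eq using card_preimage[OF Tsub[of 1]] cT[of 1] by simp
  have cRZ: "card (R - Zc) = (m - 1) * card Zc"
  proof -
    have "card (R - Zc) = card R - card Zc" using Zc_R finZ by (intro card_Diff_subset) auto
    then show ?thesis using card_R by (simp add: diff_mult_distrib)
  qed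
  have pA: "m * card A = card F1" unfolding A_def
  proof (rule card_cc_partition)
    show "F1 \<subseteq> carrier G" unfolding F1_def using F_car by auto
    show "conj_class G g \<subseteq> F1" if "g \<in> F1" for g
      using that cc_F cc_parity[OF ev] unfolding F1_def by fastforce
    show "card (conj_class G g) = m" if "g \<in> F1" for g using that cc_size_F unfolding F1_def by auto
  qed
  have pB: "m * card B = card F2" unfolding B_def
  proof (rule card_cc_partition)
    show "F2 \<subseteq> carrier G" unfolding F2_def using F_car by auto
    show "conj_class G g \<subseteq> F2" if "g \<in> F2" for g
      using that cc_F cc_parity[OF ev] unfolding F2_def by fastforce
    show "card (conj_class G g) = m" if "g \<in> F2" for g using that cc_size_F unfolding F2_def by auto
  qed
  have pI: "2 * card I = card (R - Zc)" unfolding I_def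
  proof (rule card_cc_partition)
    show "R - Zc \<subseteq> carrier G" using R_car by auto
    show "conj_class G g \<subseteq> R - Zc" if "g \<in> R - Zc" for g
      using that cc_R cc_nonZ[OF R_car] by blast
    show "card (conj_class G g) = 2" if "g \<in> R - Zc" for g using that cc_size_R by auto
  qed
  define p where "p = card A"
  define n where "n = card I"
  have m2: "m = 2 * (m div 2)" using ev by simp
  have "m * card A = m * card B" using pA pB cF1 cF2 by simp
  then have cB: "card B = p" unfolding p_def using m_pos by simp
  have "2 * (m div 2) * p = (m div 2) * card Zc" using pA cF1 m2 unfolding p_def by (simp add: ac_simps)
  moreover have "m div 2 > 0" using m3 by simp
  ultimately have Zp: "card Zc = 2 * p" by (simp add: ac_simps)
  have nn: "n = (m - 1) * p" using pI cRZ Zp unfolding n_def by simp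
  have p1: "p \<ge> 1"
  proof -
    have "c0 \<in> F1" using c0' unfolding F1_def by simp
    then have "A \<noteq> {}" unfolding A_def by auto
    moreover have "finite A" using V finV by (metis finite_Un)
    ultimately show ?thesis unfolding p_def by (simp add: Suc_le_eq card_gt_0_iff)
  qed
  have Ine: "I \<noteq> {}"
  proof -
    have "x0 \<in> R" "x0 \<notin> Zc" using x0 \<pi>_ker[of x0] unfolding R_def by auto
    then show ?thesis unfolding I_def by auto
  qed
  have adj: "NCCC_adj G u w \<longleftrightarrow> (u \<in> I \<and> w \<notin> I) \<or> (u \<in> A \<and> w \<notin> A) \<or> (u \<in> B \<and> w \<notin> B)"
    if u: "u \<in> NCCC_vertices G" and w: "w \<in> NCCC_vertices G" for u w
  proof -
    have cls: "\<exists>g. ((g \<in> R \<and> g \<notin> Zc \<and> x \<in> I) \<or> (g \<in> F1 \<and> x \<in> A) \<or> (g \<in> F2 \<and> x \<in> B)) \<and> x = conj_class G g"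
      if "x \<in> NCCC_vertices G" for x
      using that unfolding V I_def A_def B_def by blast
    obtain g where g: "(g \<in> R \<and> g \<notin> Zc \<and> u \<in> I) \<or> (g \<in> F1 \<and> u \<in> A) \<or> (g \<in> F2 \<and> u \<in> B)" "u = conj_class G g"
      using cls[OF u] by blast
    obtain h where h: "(h \<in> R \<and> h \<notin> Zc \<and> w \<in> I) \<or> (h \<in> F1 \<and> w \<in> A) \<or> (h \<in> F2 \<and> w \<in> B)" "w = conj_class G h"
      using cls[OF w] by blast
    have F1F: "x \<in> F1 \<Longrightarrow> x \<in> F" and F2F: "x \<in> F2 \<Longrightarrow> x \<in> F" for x unfolding F1_def F2_def by auto
    have FFs: "\<not> NCCC_adj G (conj_class G x) (conj_class G y)" if "x \<in> F" "y \<in> F" "fst (\<pi> x) mod 2 = fst (\<pi> y) mod 2" for x y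
    proof -
      have c: "0 \<le> fst (\<pi> x)" "fst (\<pi> x) < int m" using \<pi>_car[OF F_car[OF that(1)]] by (cases "\<pi> x"; auto simp: dcar)+
      have "(fst (\<pi> y) + 2 * ((fst (\<pi> x) - fst (\<pi> y)) div 2)) mod int m = fst (\<pi> x)"
      proof -
        have "2 * ((fst (\<pi> x) - fst (\<pi> y)) div 2) = fst (\<pi> x) - fst (\<pi> y)" using that(3) by presburger
        then show ?thesis using c by simp
      qed
      then show ?thesis using adj_FF_same[OF that(1,2)] by blast
    qed
    have F12: "fst (\<pi> x) mod 2 \<noteq> fst (\<pi> y) mod 2" if "x \<in> F1" "y \<in> F2" for x y
      using that unfolding F1_def F2_def by auto
    have F1p: "fst (\<pi> x) mod 2 = 0" if "x \<in> F1" for x using that unfolding F1_def by auto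
    have F2p: "fst (\<pi> x) mod 2 = 1" if "x \<in> F2" for x using that unfolding F2_def by auto
    from g(1) consider (gI) "g \<in> R" "g \<notin> Zc" "u \<in> I" | (gA) "g \<in> F1" "u \<in> A" | (gB) "g \<in> F2" "u \<in> B" by blast
    then show ?thesis
    proof cases
      case gI
      then have uu: "u \<notin> A" "u \<notin> B" using dIA dIB by auto
      from h(1) consider (hI) "h \<in> R" "h \<notin> Zc" "w \<in> I" | (hA) "h \<in> F1" "w \<in> A" | (hB) "h \<in> F2" "w \<in> B" by blast
      then show ?thesis
      proof cases
        case hI then show ?thesis using adj_RR[of g h] gI uu g(2) h(2) by auto
      next
        case hA then have "w \<notin> I" using dIA by auto
        then show ?thesis using adj_RF(1)[of g h] gI hA F1F g(2) h(2) by auto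
      next
        case hB then have "w \<notin> I" using dIB by auto
        then show ?thesis using adj_RF(1)[of g h] gI hB F2F g(2) h(2) by auto
      qed
    next
      case gA
      then have uu: "u \<notin> I" "u \<notin> B" using dIA dAB by auto
      from h(1) consider (hI) "h \<in> R" "h \<notin> Zc" "w \<in> I" | (hA) "h \<in> F1" "w \<in> A" | (hB) "h \<in> F2" "w \<in> B" by blast
      then show ?thesis
      proof cases
        case hI then have "w \<notin> A" using dIA by auto
        then show ?thesis using adj_RF(2)[of h g] gA hI F1F g(2) h(2) uu by auto
      next
        case hA then have "w \<notin> I" "w \<notin> B" using dIA dAB by auto
        then show ?thesis using FFs[of g h] gA hA F1F F1p g(2) h(2) uu by auto
      next
        case hB then have "w \<notin> A" using dAB by auto
        then show ?thesis using adj_FF_diff[OF ev, of g h] gA hB F1F F2F F1p F2p g(2) h(2) uu by auto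
      qed
    next
      case gB
      then have uu: "u \<notin> I" "u \<notin> A" using dIB dAB by auto
      from h(1) consider (hI) "h \<in> R" "h \<notin> Zc" "w \<in> I" | (hA) "h \<in> F1" "w \<in> A" | (hB) "h \<in> F2" "w \<in> B" by blast
      then show ?thesis
      proof cases
        case hI then have "w \<notin> B" using dIB by auto
        then show ?thesis using adj_RF(2)[of h g] gB hI F2F g(2) h(2) uu by auto
      next
        case hA then have "w \<notin> B" using dAB by auto
        then show ?thesis using adj_FF_diff[OF ev, of g h] gB hA F1F F2F F1p F2p g(2) h(2) uu by auto
      next
        case hB then have "w \<notin> I" "w \<notin> A" using dIB dAB by auto
        then show ?thesis using FFs[of g h] gB hB F2F F2p g(2) h(2) uu by auto
      qed
    qed
  qed
  define N where "N = real (n + 4 * p)"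
  define Dr where "Dr = N^2 - 16 * (real p)^2"
  have Dr0: "Dr \<ge> 0" unfolding Dr_def N_def
  proof -
    have "4 * real p \<le> real (n + 4 * p)" by simp
    then have "(4 * real p)^2 \<le> (real (n + 4 * p))^2" by (intro power_mono) auto
    then show "real (n + 4 * p)^2 - 16 * (real p)^2 \<ge> 0" by (simp add: power_mult_distrib)
  qed
  define x where "x = (N + sqrt Dr) / 2"
  have sq: "sqrt Dr * sqrt Dr = Dr" using Dr0 by simp
  have xeq: "x^2 - N * x + 4 * (real p)^2 = 0"
  proof -
    have "x^2 - N * x + 4 * (real p)^2 = (sqrt Dr * sqrt Dr - Dr) / 4"
      unfolding x_def Dr_def by (simp add: power2_eq_square field_simps)
    then show ?thesis using sq by simp
  qed
  define lm where "lm = complex_of_real x"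
  have lmeq: "lm^2 - of_nat (n + 4*p) * lm + of_nat (4*p^2) = 0"
  proof -
    have "complex_of_real (x^2 - N * x + 4 * (real p)^2) = 0" using xeq by simp
    then show ?thesis unfolding lm_def N_def by simp
  qed
  have eig: "is_eigenvalue_on (NCCC_vertices G) (signless_laplacian (NCCC_vertices G) (NCCC_adj G)) lm"
    by (rule tripartite_eigen[OF finV V dIA dIB dAB adj p_def[symmetric] cB n_def[symmetric] p1 Ine lmeq])
  have "lm \<notin> \<int>"
  proof
    assume "lm \<in> \<int>"
    then obtain k where k: "lm = of_int k" by (auto elim: Ints_cases)
    have "(of_int (k^2 - (int ((m-1)*p) + 4 * int p) * k + 4 * (int p)^2) :: complex) = 0"
      using lmeq unfolding k nn by (simp add: of_nat_diff)
    then have "k^2 - (int ((m-1)*p) + 4 * int p) * k + 4 * (int p)^2 = 0" by (simp only: of_int_eq_0_iff)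
    then show False using no_int_root[OF ev m3 p1] by simp
  qed
  then show ?thesis unfolding Q_integral_def using eig by blast
qed

end


theorem theorem3p5:
  fixes G (structure) and m :: nat
  assumes "group G" and "finite (carrier G)" and "m \<ge> 3"
    and "G Mod (grp_center G) \<cong> dihedral m"
  shows "Q_integral (NCCC_vertices G) (NCCC_adj G) \<longleftrightarrow> odd m"
proof -
  interpret group G by fact
  let ?Z = "grp_center G"
  have Zsub: "?Z \<subseteq> carrier G" unfolding grp_center_def by auto
  have Zc: "z \<otimes> g = g \<otimes> z" if "z \<in> ?Z" "g \<in> carrier G" for z g using that unfolding grp_center_def by auto
  have sub: "subgroup ?Z G"
  proof (rule subgroupI)
    show "?Z \<subseteq> carrier G" by (rule Zsub)
    have "\<one> \<in> ?Z" unfolding grp_center_def by auto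
    then show "?Z \<noteq> {}" by auto
  next
    fix a assume a: "a \<in> ?Z"
    have ac: "a \<in> carrier G" using a Zsub by auto
    have "inv a \<otimes> g = g \<otimes> inv a" if g: "g \<in> carrier G" for g
    proof -
      have "a \<otimes> inv g = inv g \<otimes> a" using Zc[OF a] g by simp
      then have "inv (a \<otimes> inv g) = inv (inv g \<otimes> a)" by simp
      then show ?thesis using ac g by (simp add: inv_mult_group)
    qed
    then show "inv a \<in> ?Z" using ac unfolding grp_center_def by auto
  next
    fix a b assume a: "a \<in> ?Z" and b: "b \<in> ?Z"
    have ac: "a \<in> carrier G" "b \<in> carrier G" using a b Zsub by auto
    have "a \<otimes> b \<otimes> g = g \<otimes> (a \<otimes> b)" if g: "g \<in> carrier G" for g
    proof -
      have "a \<otimes> b \<otimes> g = a \<otimes> (g \<otimes> b)" using Zc[OF b g] ac g by (simp add: m_assoc)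
      also have "\<dots> = g \<otimes> (a \<otimes> b)" using Zc[OF a g] ac g by (simp add: m_assoc[symmetric])
      finally show ?thesis .
    qed
    then show "a \<otimes> b \<in> ?Z" using ac unfolding grp_center_def by auto
  qed
  have nrm: "?Z \<lhd> G"
    unfolding normal_inv_iff
  proof (intro conjI ballI sub)
    fix x z assume x: "x \<in> carrier G" and z: "z \<in> ?Z"
    have zc: "z \<in> carrier G" using z Zsub by auto
    have "x \<otimes> z \<otimes> inv x = z \<otimes> x \<otimes> inv x" using Zc[OF z x] by simp
    also have "\<dots> = z" using x zc by (simp add: m_assoc)
    finally have "x \<otimes> z \<otimes> inv x = z" .
    then show "x \<otimes> z \<otimes> inv x \<in> ?Z" using z by simp
  qed
  interpret N: normal ?Z G by (rule nrm)
  obtain h where h: "h \<in> iso (G Mod ?Z) (dihedral m)" using assms(4) unfolding is_iso_def by auto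
  have hhom: "h \<in> hom (G Mod ?Z) (dihedral m)" and himg: "h ` carrier (G Mod ?Z) = carrier (dihedral m)"
    and hinj: "inj_on h (carrier (G Mod ?Z))" using h by (auto simp: iso_iff)
  define \<pi> where "\<pi> g = h (?Z #> g)" for g
  have cos: "?Z #> g \<in> carrier (G Mod ?Z)" if "g \<in> carrier G" for g using that by (simp add: carrier_FactGroup)
  have hmul: "h (A <#> B) = dmul m (h A) (h B)" if "A \<in> carrier (G Mod ?Z)" "B \<in> carrier (G Mod ?Z)" for A B
    using hom_mult[OF hhom that] by (simp add: dihedral_mult)
  have m0: "m > 0" using assms(3) by simp
  have Zcar: "?Z \<in> carrier (G Mod ?Z)" using cos[of \<one>] Zsub by simp
  have hZ: "h ?Z = (0, 0)"
  proof -
    have "?Z <#> ?Z = ?Z" using N.rcos_sum[of \<one> \<one>] Zsub by simp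
    then have "dmul m (h ?Z) (h ?Z) = dmul m (h ?Z) (0, 0)"
      using hmul[OF Zcar Zcar] dmul_unit[of "h ?Z" m] hom_in_carrier[OF hhom Zcar] by simp
    then show ?thesis
      using dmul_cancel[of "h ?Z" m "h ?Z" "(0,0)"] hom_in_carrier[OF hhom Zcar] m0 by (simp add: dcar)
  qed
  interpret dz G m \<pi>
  proof
    show "finite (carrier G)" by fact
    show "m \<ge> 3" by fact
    show "\<pi> g \<in> carrier (dihedral m)" if "g \<in> carrier G" for g
      unfolding \<pi>_def using hom_in_carrier[OF hhom cos[OF that]] .
    show "\<pi> (g \<otimes> k) = dmul m (\<pi> g) (\<pi> k)" if "g \<in> carrier G" "k \<in> carrier G" for g k
      unfolding \<pi>_def using hmul[OF cos[OF that(1)] cos[OF that(2)]] N.rcos_sum[OF that] by simp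
    show "\<exists>g\<in>carrier G. \<pi> g = d" if "d \<in> carrier (dihedral m)" for d
    proof -
      have "d \<in> h ` (\<lambda>x. ?Z #> x) ` carrier G" using that himg unfolding carrier_FactGroup by simp
      then show ?thesis unfolding \<pi>_def by blast
    qed
    show "\<pi> g = (0, 0) \<longleftrightarrow> g \<in> ?Z" if g: "g \<in> carrier G" for g
    proof
      assume "\<pi> g = (0, 0)"
      then have "h (?Z #> g) = h ?Z" unfolding \<pi>_def using hZ by simp
      then have "?Z #> g = ?Z" using hinj cos[OF g] Zcar by (auto dest: inj_onD)
      then show "g \<in> ?Z" using rcos_self[OF g sub] by simp
    next
      assume "g \<in> ?Z"
      then have "?Z #> g = ?Z" using coset_join2[OF g sub] by simp
      then show "\<pi> g = (0, 0)" unfolding \<pi>_def using hZ by simp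
    qed
  qed
  show ?thesis using odd_case even_case by blast
qed


end
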